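(* Fix $\alpha\in(0,1)$. Let $(P_i)_{i\ge0}$ be the $\alpha$-random walk and $X_i=1$ if $P_i$ is visible, $X_i=0$ otherwise. Then $$\mathbf E(X_1+\cdots+X_n)=\frac{6n}{\pi^2}+O(\sqrt n\log n),$$ with implied constant depending only on $\alpha$.
   Context: The $\alpha$-random walk: $P_0=(0,0)$ and $P_{i+1}=P_i+(1,0)$ with probability $\alpha$, $P_{i+1}=P_i+(0,1)$ with probability $1-\alpha$, independently. A lattice point $(a,b)$ is visible if $\gcd(a,b)=1$. *)

theory Defs
  imports "HOL-Probability.Probability" "HOL-Library.Landau_Symbols"
begin

text \<open>A step sequence s: step j (j = 0,1,...) goes right, i.e. adds (1,0), iff s j = True,
  otherwise it goes up, i.e. adds (0,1).  The walk position after i steps:\<close>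
definition walk :: "(nat \<Rightarrow> bool) \<Rightarrow> nat \<Rightarrow> nat \<times> nat" where
  "walk s i = (card {j. j < i \<and> s j}, card {j. j < i \<and> \<not> s j})"

definition visible :: "nat \<times> nat \<Rightarrow> bool" where
  "visible p \<longleftrightarrow> gcd (fst p) (snd p) = 1"

text \<open>Law of the first n steps of the alpha-random walk: independent steps,
  each going right with probability alpha.\<close>
definition steps_pmf :: "real \<Rightarrow> nat \<Rightarrow> (nat \<Rightarrow> bool) pmf" where
  "steps_pmf \<alpha> n = Pi_pmf {..<n} False (\<lambda>_. bernoulli_pmf \<alpha>)"

definition expected_visible :: "real \<Rightarrow> nat \<Rightarrow> real" where
  "expected_visible \<alpha> n =
     measure_pmf.expectation (steps_pmf \<alpha> n)
       (\<lambda>s. \<Sum>i=1..n. if visible (walk s i) then 1 else 0)"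

end

theory Submission
  imports Defs "HOL-Computational_Algebra.Squarefree" "HOL-Computational_Algebra.Primes"
begin


definition mu :: "nat \<Rightarrow> real" where
  "mu d = (if squarefree d then (-1) ^ card (prime_factors d) else 0)"

lemma abs_mu_le: "\<bar>mu d\<bar> \<le> 1"
  by (simp add: mu_def)

lemma mu_sum:
  assumes "m > 0"
  shows "(\<Sum>d | d dvd m. mu d) = (if m = 1 then 1 else 0)"
proof (cases "m = 1")
  case True
  then show ?thesis by (simp add: mu_def)
next
  case False
  with assms have "m > 1" by simp
  then obtain p :: nat where p: "prime p" "p dvd m"
    using prime_factor_nat by (metis less_irrefl)
  define D where "D = {d. d dvd m \<and> squarefree d}"
  have finD: "finite D" unfolding D_def using assms by (auto intro: finite_subset[of _ "{..m}"] dest: dvd_imp_le)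
  have "(\<Sum>d | d dvd m. mu d) = (\<Sum>d\<in>D. mu d)"
    unfolding D_def using assms
    by (intro sum.mono_neutral_right) (auto simp: mu_def intro: finite_subset[of _ "{..m}"] dest: dvd_imp_le)
  define \<iota> where "\<iota> d = (if p dvd d then d div p else d * p)" for d
  have p1: "p > 1" using p prime_gt_1_nat by blast
  have key: "\<iota> d \<in> D \<and> \<iota> (\<iota> d) = d \<and> mu (\<iota> d) = - mu d" if d: "d \<in> D" for d
  proof (cases "p dvd d")
    case True
    then obtain e where e: "d = p * e" by blast
    have sqd: "squarefree d" "d dvd m" using d by (auto simp: D_def)
    have "e \<noteq> 0" using e sqd by (metis mult_0_right not_squarefree_0)
    have npe: "\<not> p dvd e"
    proof
      assume "p dvd e"
      then have "p ^ 2 dvd d" using e by (auto simp: power2_eq_square)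
      then show False using squarefreeD[OF sqd(1)] p1 by auto
    qed
    have ie: "\<iota> d = e" using True e p1 by (simp add: \<iota>_def)
    have ide: "\<iota> e = d" using npe e by (simp add: \<iota>_def mult.commute)
    have sqe: "squarefree e" using squarefree_mono[OF _ sqd(1)] e by auto
    have "e dvd m" using sqd e by (metis dvd_mult_right)
    have pf: "prime_factors d = insert p (prime_factors e)"
      using e \<open>e \<noteq> 0\<close> p p1 by (simp add: prime_factors_product prime_prime_factors)
    have "p \<notin> prime_factors e" using npe by auto
    then have "card (prime_factors d) = Suc (card (prime_factors e))"
      using pf by simp
    then have "mu e = - mu d" using sqd sqe by (simp add: mu_def)
    then show ?thesis using ie ide sqe \<open>e dvd m\<close> by (simp add: D_def)
  next
    case False
    have sqd: "squarefree d" "d dvd m" using d by (auto simp: D_def)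
    have "d \<noteq> 0" using sqd by (metis not_squarefree_0)
    have ie: "\<iota> d = d * p" using False by (simp add: \<iota>_def)
    have ide: "\<iota> (d * p) = d" using p1 by (simp add: \<iota>_def)
    have cop: "coprime d p" using p False by (metis prime_imp_coprime coprime_commute)
    have sq: "squarefree (d * p)" using squarefree_mult_coprime[OF cop sqd(1) squarefree_prime[OF p(1)]] .
    have dv: "d * p dvd m" using cop sqd(2) p(2) by (simp add: divides_mult)
    have pf: "prime_factors (d * p) = insert p (prime_factors d)"
      using \<open>d \<noteq> 0\<close> p p1 by (auto simp: prime_factors_product prime_prime_factors)
    have "p \<notin> prime_factors d" using False by auto
    then have "card (prime_factors (d * p)) = Suc (card (prime_factors d))"
      using pf by simp
    then have "mu (d * p) = - mu d" using sqd sq by (simp add: mu_def)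
    then show ?thesis using ie ide sq dv by (simp add: D_def)
  qed
  have "(\<Sum>d\<in>D. mu d) = (\<Sum>d\<in>D. mu (\<iota> d))"
    by (rule sum.reindex_bij_witness[where i = \<iota> and j = \<iota>]) (use key in auto)
  also have "\<dots> = - (\<Sum>d\<in>D. mu d)"
    by (simp add: key sum_negf)
  finally have "(\<Sum>d\<in>D. mu d) = 0" by simp
  then show ?thesis using False \<open>(\<Sum>d | d dvd m. mu d) = (\<Sum>d\<in>D. mu d)\<close> by simp
qed



lemma sum_divisors_swap:
  fixes f :: "nat \<Rightarrow> nat \<Rightarrow> 'a :: comm_monoid_add"
  shows "(\<Sum>i=1..n. \<Sum>d | d dvd i. f d i) = (\<Sum>d=1..n. \<Sum>m=1..n div d. f d (d*m))"
proof -
  have "(\<Sum>i=1..n. \<Sum>d | d dvd i. f d i) = (\<Sum>i=1..n. \<Sum>d=1..n. if d dvd i then f d i else 0)"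
  proof (rule sum.cong[OF refl])
    fix i assume i: "i \<in> {1..n}"
    have "{d. d dvd i} = {d\<in>{1..n}. d dvd i}"
      using i by (auto dest: dvd_imp_le intro: Suc_leI)
    then show "(\<Sum>d | d dvd i. f d i) = (\<Sum>d=1..n. if d dvd i then f d i else 0)"
      by (simp only: sum.inter_filter[OF finite_atLeastAtMost])
  qed
  also have "\<dots> = (\<Sum>d=1..n. \<Sum>i=1..n. if d dvd i then f d i else 0)"
    by (rule sum.swap)
  also have "\<dots> = (\<Sum>d=1..n. \<Sum>m=1..n div d. f d (d*m))"
  proof (rule sum.cong[OF refl])
    fix d assume d: "d \<in> {1..n}"
    have "(\<Sum>i=1..n. if d dvd i then f d i else 0) = (\<Sum>i\<in>{i\<in>{1..n}. d dvd i}. f d i)"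
      by (simp only: sum.inter_filter[OF finite_atLeastAtMost])
    also have "\<dots> = (\<Sum>m=1..n div d. f d (d*m))"
    proof (rule sum.reindex_bij_witness[where i = "\<lambda>m. d*m" and j = "\<lambda>i. i div d"])
      fix m assume m: "m \<in> {1..n div d}"
      show "d * m div d = m" using d by simp
      show "d * m \<in> {i \<in> {1..n}. d dvd i}"
        using d m by (auto simp: less_eq_div_iff_mult_less_eq mult.commute)
    next
      fix i assume i: "i \<in> {i \<in> {1..n}. d dvd i}"
      then show "d * (i div d) = i" by auto
      show "i div d \<in> {1..n div d}"
        using i d by (auto simp: div_le_mono elim!: dvdE)
    qed simp
    finally show "(\<Sum>i=1..n. if d dvd i then f d i else 0) = (\<Sum>m=1..n div d. f d (d*m))" .
  qed
  finally show ?thesis .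
qed

lemma div_le_real: "real (n div d) \<le> real n / real d"
  by (metis floor_divide_of_nat_eq of_int_floor_le of_int_of_nat_eq)

lemma div_gt_real: "real n / real d < real (n div d) + 1"
  by (metis floor_divide_of_nat_eq floor_correct of_int_of_nat_eq of_int_1 of_int_add)

lemma sum_inv_sqrt_le: "(\<Sum>m=1..M. 1 / sqrt (real m)) \<le> 2 * sqrt (real M)"
proof (induction M)
  case 0
  then show ?case by simp
next
  case (Suc M)
  have a: "sqrt (real M) * sqrt (real (Suc M)) \<le> real M + 1/2"
  proof -
    have "sqrt (real M) * sqrt (real (Suc M)) = sqrt (real M * (real M + 1))"
      by (simp add: real_sqrt_mult)
    also have "\<dots> \<le> sqrt ((real M + 1/2)^2)"
      by (intro real_sqrt_le_mono) (simp add: power2_eq_square algebra_simps)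
    also have "\<dots> = real M + 1/2" by simp
    finally show ?thesis .
  qed
  have s: "sqrt (real (Suc M)) > 0" by simp
  have "1 / sqrt (real (Suc M)) \<le> 2 * sqrt (real (Suc M)) - 2 * sqrt (real M)"
  proof -
    have "1 \<le> 2 * sqrt (real (Suc M)) * sqrt (real (Suc M)) - 2 * sqrt (real M) * sqrt (real (Suc M))"
      using a by (simp add: algebra_simps)
    then show ?thesis using s by (simp add: field_simps)
  qed
  then show ?case using Suc by simp
qed

lemma harm_le_ln: "n \<ge> 1 \<Longrightarrow> (\<Sum>d=1..n. 1 / real d) \<le> 1 + ln (real n)"
proof -
  assume n: "n \<ge> 1"
  have "(\<Sum>d=1..n. 1 / real d) = harm n"
    by (simp add: harm_def inverse_eq_divide)
  moreover obtain k where k: "n = Suc k" using n by (cases n) auto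
  moreover have "harm (Suc k) - ln (real (Suc k)) \<le> harm (Suc 0) - ln (real (Suc 0))"
    using decseq_harm_diff_ln unfolding decseq_def by blast
  ultimately show ?thesis by (simp add: harm_def)
qed

lemma divisor_sqrt_sum_le:
  assumes "n \<ge> 1"
  shows "(\<Sum>i=1..n. \<Sum>d | d dvd i. 1 / sqrt (real i)) \<le> 2 * sqrt (real n) * (1 + ln (real n))"
proof -
  have "(\<Sum>i=1..n. \<Sum>d | d dvd i. 1 / sqrt (real i)) = (\<Sum>d=1..n. \<Sum>m=1..n div d. 1 / sqrt (real (d*m)))"
    by (rule sum_divisors_swap)
  also have "\<dots> \<le> (\<Sum>d=1..n. 2 * sqrt (real n) * (1 / real d))"
  proof (rule sum_mono)
    fix d assume d: "d \<in> {1..n}"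
    have "(\<Sum>m=1..n div d. 1 / sqrt (real (d*m))) = (1 / sqrt (real d)) * (\<Sum>m=1..n div d. 1 / sqrt (real m))"
      by (simp add: sum_distrib_left real_sqrt_mult)
    also have "\<dots> \<le> (1 / sqrt (real d)) * (2 * sqrt (real (n div d)))"
      by (intro mult_left_mono sum_inv_sqrt_le) simp
    also have "sqrt (real (n div d)) \<le> sqrt (real n / real d)"
      by (intro real_sqrt_le_mono) (rule div_le_real)
    then have "(1 / sqrt (real d)) * (2 * sqrt (real (n div d))) \<le> (1 / sqrt (real d)) * (2 * sqrt (real n / real d))"
      by (intro mult_left_mono) auto
    also have "(1 / sqrt (real d)) * (2 * sqrt (real n / real d)) = 2 * sqrt (real n) * (1 / real d)"
      using d by (simp add: real_sqrt_divide field_simps)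
    finally show "(\<Sum>m=1..n div d. 1 / sqrt (real (d*m))) \<le> 2 * sqrt (real n) * (1 / real d)" by simp
  qed
  also have "\<dots> = 2 * sqrt (real n) * (\<Sum>d=1..n. 1 / real d)"
    by (simp add: sum_distrib_left)
  also have "\<dots> \<le> 2 * sqrt (real n) * (1 + ln (real n))"
    using harm_le_ln[OF assms] by (intro mult_left_mono) auto
  finally show ?thesis .
qed



definition Zs :: "nat \<Rightarrow> real" where "Zs K = (\<Sum>m=1..K. 1 / real m ^ 2)"

lemma Zs_alt: "Zs K = (\<Sum>n<K. 1 / (real n + 1)^2)"
  unfolding Zs_def
  by (rule sum.reindex_bij_witness[where i = "\<lambda>n. n + 1" and j = "\<lambda>m. m - 1"]) (auto simp: add_ac)

lemma Zs_le: "Zs K \<le> pi^2 / 6"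
proof -
  have s: "(\<lambda>n. 1 / (real n + 1)^2) sums (pi^2/6)"
  proof -
    have "(\<lambda>n. 1 / (real n + 1)^2) = (\<lambda>n::nat. 1 / real ((n + 1)^2))"
      by (simp only: of_nat_power of_nat_add of_nat_1)
    then show ?thesis using inverse_squares_sums by (simp only:)
  qed
  have "(\<Sum>n<K. 1 / (real n + 1)^2) \<le> (\<Sum>n. 1 / (real n + 1)^2)"
    by (rule sum_le_suminf) (use s in \<open>auto simp: sums_iff\<close>)
  then show ?thesis using s by (simp add: Zs_alt sums_iff)
qed

lemma Zs_tail_aux:
  assumes "K \<ge> 1"
  shows "(\<Sum>n<K+j. 1 / (real n + 1)^2) \<le> (\<Sum>n<K. 1 / (real n + 1)^2) + 1 / real K - 1 / real (K + j)"
proof (induction j)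
  case 0
  then show ?case by simp
next
  case (Suc j)
  have K: "real K \<ge> 1" using assms by simp
  have b: "1 / (real (K + j) + 1)^2 \<le> 1 / real (K + j) - 1 / real (K + Suc j)"
  proof -
    define x where "x = real (K + j)"
    have x: "x \<ge> 1" using K by (simp add: x_def)
    have e: "1 / x - 1 / (x + 1) = 1 / (x * (x + 1))" using x by (simp add: field_simps)
    have "1 / (x + 1)^2 \<le> 1 / (x * (x + 1))"
      using x by (intro divide_left_mono) (auto simp: power2_eq_square intro: mult_pos_pos)
    then have "1 / (x + 1)^2 \<le> 1 / x - 1 / (x + 1)" using e by simp
    moreover have "real (K + Suc j) = x + 1" by (simp add: x_def)
    ultimately show ?thesis unfolding x_def by (simp only:)
  qed
  have "(\<Sum>n<K + Suc j. 1 / (real n + 1)^2) = (\<Sum>n<K + j. 1 / (real n + 1)^2) + 1 / (real (K + j) + 1)^2"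
    by simp
  then show ?case using Suc b by linarith
qed

lemma Zs_ge: "K \<ge> 1 \<Longrightarrow> pi^2 / 6 - Zs K \<le> 1 / real K"
proof -
  assume K: "K \<ge> 1"
  have s: "(\<lambda>n. 1 / (real n + 1)^2) sums (pi^2/6)"
  proof -
    have "(\<lambda>n. 1 / (real n + 1)^2) = (\<lambda>n::nat. 1 / real ((n + 1)^2))"
      by (simp only: of_nat_power of_nat_add of_nat_1)
    then show ?thesis using inverse_squares_sums by (simp only:)
  qed
  then have lim: "(\<lambda>M. \<Sum>n<M. 1 / (real n + 1)^2) \<longlonglongrightarrow> pi^2/6"
    by (simp add: sums_def)
  have "\<forall>M\<ge>K. (\<Sum>n<M. 1 / (real n + 1)^2) \<le> Zs K + 1 / real K"
  proof (intro allI impI)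
    fix M assume "M \<ge> K"
    then obtain j where "M = K + j" using le_Suc_ex by blast
    then show "(\<Sum>n<M. 1 / (real n + 1)^2) \<le> Zs K + 1 / real K"
    proof -
      have h: "0 \<le> 1 / real (K + j)" by simp
      have "(\<Sum>n<K+j. 1 / (real n + 1)^2) \<le> (\<Sum>n<K. 1 / (real n + 1)^2) + 1 / real K"
        using Zs_tail_aux[OF K, of j] h by linarith
      then show ?thesis using \<open>M = K + j\<close> by (simp add: Zs_alt)
    qed
  qed
  then have "pi^2/6 \<le> Zs K + 1 / real K"
    by (intro LIMSEQ_le_const2[OF lim]) auto
  then show ?thesis by simp
qed

definition S :: "nat \<Rightarrow> real" where "S N = (\<Sum>d=1..N. mu d / real d ^ 2)"

lemma mu_Zs_identity:
  assumes "N \<ge> 1"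
  shows "(\<Sum>d=1..N. mu d / real d ^ 2 * Zs (N div d)) = 1"
proof -
  have "(\<Sum>i=1..N. \<Sum>d | d dvd i. mu d / real i ^ 2) = (\<Sum>d=1..N. \<Sum>m=1..N div d. mu d / real (d*m) ^ 2)"
    by (rule sum_divisors_swap)
  also have "\<dots> = (\<Sum>d=1..N. mu d / real d ^ 2 * Zs (N div d))"
    by (simp add: Zs_def sum_distrib_left power_mult_distrib)
  finally have "(\<Sum>d=1..N. mu d / real d ^ 2 * Zs (N div d)) = (\<Sum>i=1..N. \<Sum>d | d dvd i. mu d / real i ^ 2)" ..
  also have "\<dots> = (\<Sum>i=1..N. (\<Sum>d | d dvd i. mu d) / real i ^ 2)"
    by (simp add: sum_divide_distrib)
  also have "\<dots> = (\<Sum>i=1..N. (if i = 1 then 1 else 0))"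
    by (intro sum.cong refl) (simp add: mu_sum)
  also have "\<dots> = 1" using assms by simp
  finally show ?thesis .
qed

lemma inv_div_le: "1 \<le> d \<Longrightarrow> d \<le> N \<Longrightarrow> 1 / real (N div d) \<le> 2 * real d / real N"
proof -
  assume d: "1 \<le> d" "d \<le> N"
  have q: "N div d \<ge> 1" using d by (auto simp: div_greater_zero_iff Suc_le_eq)
  have "real N / real d < real (N div d) + 1" by (rule div_gt_real)
  also have "\<dots> \<le> 2 * real (N div d)" using q by simp
  finally have "real N < 2 * real (N div d) * real d" using d by (simp add: field_simps)
  then show ?thesis using d q by (simp add: field_simps)
qed

lemma S_approx:
  assumes "N \<ge> 1"
  shows "\<bar>real N * S N - 6 * real N / pi^2\<bar> \<le> 2 * (\<Sum>d=1..N. 1 / real d)"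
proof -
  define T where "T K = pi^2/6 - Zs K" for K
  have "1 = (\<Sum>d=1..N. mu d / real d ^ 2 * (pi^2/6 - T (N div d)))"
    using mu_Zs_identity[OF assms] by (simp add: T_def)
  also have "\<dots> = pi^2/6 * S N - (\<Sum>d=1..N. mu d / real d ^ 2 * T (N div d))"
    by (simp add: S_def algebra_simps sum_subtractf sum_distrib_left sum_distrib_right)
  finally have eq: "pi^2/6 * S N - 1 = (\<Sum>d=1..N. mu d / real d ^ 2 * T (N div d))" by simp
  have "\<bar>\<Sum>d=1..N. mu d / real d ^ 2 * T (N div d)\<bar> \<le> (\<Sum>d=1..N. \<bar>mu d / real d ^ 2 * T (N div d)\<bar>)"
    by (rule sum_abs)
  also have "\<dots> \<le> (\<Sum>d=1..N. 2 / real N * (1 / real d))"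
  proof (rule sum_mono)
    fix d assume d: "d \<in> {1..N}"
    have q: "N div d \<ge> 1" using d by (auto simp: div_greater_zero_iff Suc_le_eq)
    have T0: "0 \<le> T (N div d)" using Zs_le by (simp add: T_def)
    have T1: "T (N div d) \<le> 1 / real (N div d)" using Zs_ge[OF q] by (simp add: T_def)
    also have "\<dots> \<le> 2 * real d / real N" using d inv_div_le by auto
    finally have T1': "T (N div d) \<le> 2 * real d / real N" .
    have "\<bar>mu d / real d ^ 2 * T (N div d)\<bar> = \<bar>mu d\<bar> * (T (N div d) / real d ^ 2)"
      using T0 by (simp add: abs_mult)
    also have "\<dots> \<le> 1 * (T (N div d) / real d ^ 2)"
      using abs_mu_le T0 by (intro mult_right_mono) auto
    also have "\<dots> \<le> (2 * real d / real N) / real d ^ 2"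
      using divide_right_mono[OF T1', of "real d ^ 2"] by simp
    also have "\<dots> = 2 / real N * (1 / real d)"
      using d by (simp add: field_simps power2_eq_square)
    finally show "\<bar>mu d / real d ^ 2 * T (N div d)\<bar> \<le> 2 / real N * (1 / real d)" .
  qed
  also have "\<dots> = 2 / real N * (\<Sum>d=1..N. 1 / real d)"
    by (simp add: sum_distrib_left)
  finally have b: "\<bar>pi^2/6 * S N - 1\<bar> \<le> 2 / real N * (\<Sum>d=1..N. 1 / real d)" using eq by simp
  have "real N * S N - 6 * real N / pi^2 = (6 * real N / pi^2) * (pi^2/6 * S N - 1)"
    by (simp add: field_simps)
  then have "\<bar>real N * S N - 6 * real N / pi^2\<bar> = (6 * real N / pi^2) * \<bar>pi^2/6 * S N - 1\<bar>"
    by (simp add: abs_mult)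
  also have "\<dots> \<le> (6 * real N / pi^2) * (2 / real N * (\<Sum>d=1..N. 1 / real d))"
    using b by (intro mult_left_mono) auto
  also have "\<dots> = (6 / pi^2) * 2 * (\<Sum>d=1..N. 1 / real d)"
    using assms by (simp add: field_simps)
  also have "\<dots> \<le> 1 * 2 * (\<Sum>d=1..N. 1 / real d)"
  proof -
    have "pi^2 \<ge> 3^2" using pi_gt3 by (intro power_mono) auto
    then have "6 / pi^2 \<le> 1" by (simp add: field_simps)
    moreover have "(\<Sum>d=1..N. 1 / real d) \<ge> 0" by (intro sum_nonneg) auto
    ultimately show ?thesis by (intro mult_right_mono) auto
  qed
  finally show ?thesis by simp
qed

lemma main_term:
  assumes "n \<ge> 1"
  shows "\<bar>(\<Sum>i=1..n. \<Sum>d | d dvd i. mu d / real d) - 6 * real n / pi^2\<bar> \<le> 3 * (\<Sum>d=1..n. 1 / real d)"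
proof -
  have "(\<Sum>i=1..n. \<Sum>d | d dvd i. mu d / real d) = (\<Sum>d=1..n. \<Sum>m=1..n div d. mu d / real d)"
    by (rule sum_divisors_swap)
  also have "\<dots> = (\<Sum>d=1..n. mu d / real d * real (n div d))"
    by (simp add: ac_simps)
  finally have eq: "(\<Sum>i=1..n. \<Sum>d | d dvd i. mu d / real d) = \<dots>" .
  have "real n * S n - (\<Sum>d=1..n. mu d / real d * real (n div d)) =
        (\<Sum>d=1..n. mu d / real d * (real n / real d - real (n div d)))"
    by (simp add: S_def sum_distrib_left sum_subtractf algebra_simps power2_eq_square)
  also have "\<bar>\<dots>\<bar> \<le> (\<Sum>d=1..n. \<bar>mu d / real d * (real n / real d - real (n div d))\<bar>)"
    by (rule sum_abs)
  also have "\<dots> \<le> (\<Sum>d=1..n. 1 / real d)"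
  proof (rule sum_mono)
    fix d assume d: "d \<in> {1..n}"
    have a: "0 \<le> real n / real d - real (n div d)" using div_le_real by simp
    have b: "real n / real d - real (n div d) \<le> 1" using div_gt_real[of n d] by simp
    have "\<bar>mu d / real d * (real n / real d - real (n div d))\<bar> = \<bar>mu d\<bar> * (1 / real d) * (real n / real d - real (n div d))"
      using a d by (simp add: abs_mult)
    also have "\<dots> \<le> 1 * (1 / real d) * 1"
      using abs_mu_le a b d by (intro mult_mono) auto
    finally show "\<bar>mu d / real d * (real n / real d - real (n div d))\<bar> \<le> 1 / real d" by simp
  qed
  finally have c: "\<bar>real n * S n - (\<Sum>d=1..n. mu d / real d * real (n div d))\<bar> \<le> (\<Sum>d=1..n. 1 / real d)" .
  show ?thesis using c S_approx[OF assms] unfolding eq by linarith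
qed



definition bprob :: "real \<Rightarrow> nat \<Rightarrow> nat \<Rightarrow> real" where
  "bprob \<alpha> i k = real (i choose k) * \<alpha> ^ k * (1 - \<alpha>) ^ (i - k)"

lemma gcd_sub: "k \<le> i \<Longrightarrow> gcd k (i - k) = gcd k (i::nat)"
  by (metis gcd.commute gcd_add1 le_add_diff_inverse2)

lemma walk_snd: "card {j. j < i \<and> \<not> s j} = i - card {j. j < i \<and> s j}"
proof -
  have "{j. j < i \<and> \<not> s j} = {..<i} - {j. j < i \<and> s j}" by auto
  moreover have "card ({..<i} - {j. j < i \<and> s j}) = card {..<i} - card {j. j < i \<and> s j}"
    by (rule card_Diff_subset) auto
  ultimately show ?thesis by simp
qed

lemma expectation_step:
  assumes a: "0 < \<alpha>" "\<alpha> < 1" and i: "i \<le> n"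
  shows "measure_pmf.expectation (steps_pmf \<alpha> n) (\<lambda>s. if visible (walk s i) then 1 else 0 :: real)
       = (\<Sum>k=0..i. bprob \<alpha> i k * (if coprime k i then 1 else 0))"
proof -
  let ?P = "Pi_pmf {..<n} False (\<lambda>_. bernoulli_pmf \<alpha>)"
  let ?g = "\<lambda>k::nat. if coprime k i then 1 else 0 :: real"
  have bin: "binomial_pmf i \<alpha> = map_pmf (\<lambda>f. card {x\<in>{..<i}. f x}) (Pi_pmf {..<i} False (\<lambda>_. bernoulli_pmf \<alpha>))"
    using a by (intro binomial_pmf_altdef') auto
  also have "Pi_pmf {..<i} False (\<lambda>_. bernoulli_pmf \<alpha>) = map_pmf (\<lambda>f x. if x \<in> {..<i} then f x else False) ?P"
    using i by (intro Pi_pmf_subset) auto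
  finally have bin2: "binomial_pmf i \<alpha> = map_pmf (\<lambda>s. card {j. j < i \<and> s j}) ?P"
  proof -
    have cs: "\<And>f. {x \<in> {..<i}. (if x \<in> {..<i} then f x else False)} = {j. j < i \<and> f j}" by auto
    assume "binomial_pmf i \<alpha> = map_pmf (\<lambda>f. card {x \<in> {..<i}. f x}) (map_pmf (\<lambda>f x. if x \<in> {..<i} then f x else False) ?P)"
    then show ?thesis by (simp only: map_pmf_comp cs)
  qed
  have "(\<lambda>s. if visible (walk s i) then 1 else 0 :: real) = (\<lambda>s. ?g (card {j. j < i \<and> s j}))"
  proof
    fix s
    have le: "card {j. j < i \<and> s j} \<le> i"
      by (rule order.trans[OF card_mono[of "{..<i}"]]) auto
    show "(if visible (walk s i) then 1 else 0 :: real) = ?g (card {j. j < i \<and> s j})"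
      unfolding visible_def walk_def using gcd_sub[OF le] by (simp add: walk_snd coprime_iff_gcd_eq_1)
  qed
  then have "measure_pmf.expectation (steps_pmf \<alpha> n) (\<lambda>s. if visible (walk s i) then 1 else 0 :: real)
      = measure_pmf.expectation (map_pmf (\<lambda>s. card {j. j < i \<and> s j}) ?P) ?g"
    by (simp add: steps_pmf_def)
  also have "\<dots> = measure_pmf.expectation (binomial_pmf i \<alpha>) ?g"
    using bin2 by simp
  also have "\<dots> = (\<Sum>k\<in>{0..i}. ?g k * pmf (binomial_pmf i \<alpha>) k)"
    using a by (intro integral_measure_pmf_real) auto
  also have "\<dots> = (\<Sum>k=0..i. bprob \<alpha> i k * ?g k)"
    using a by (intro sum.cong refl) (simp add: bprob_def)
  finally show ?thesis .
qed

lemma expected_visible_eq: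
  assumes a: "0 < \<alpha>" "\<alpha> < 1"
  shows "expected_visible \<alpha> n = (\<Sum>i=1..n. \<Sum>k=0..i. bprob \<alpha> i k * (if coprime k i then 1 else 0))"
proof -
  have "expected_visible \<alpha> n = (\<Sum>i=1..n. measure_pmf.expectation (steps_pmf \<alpha> n) (\<lambda>s. if visible (walk s i) then 1 else 0 :: real))"
    unfolding expected_visible_def
    by (intro Bochner_Integration.integral_sum measure_pmf.integrable_const_bound[where B = 1]) auto
  also have "\<dots> = (\<Sum>i=1..n. \<Sum>k=0..i. bprob \<alpha> i k * (if coprime k i then 1 else 0))"
    using a by (intro sum.cong refl expectation_step) auto
  finally show ?thesis .
qed



lemma exp_neg_le_inv: "(y::real) > 0 \<Longrightarrow> exp (- y) \<le> 1 / y"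
proof -
  assume y: "y > 0"
  have "y \<le> exp y" using exp_ge_add_one_self[of y] by linarith
  then show ?thesis using y by (simp add: exp_minus field_simps)
qed

definition Ftel :: "real \<Rightarrow> real \<Rightarrow> real" where
  "Ftel s x = (if x \<le> s then 2 * s - x else s^2 / x)"

lemma Ftel_nonneg: "s > 0 \<Longrightarrow> x \<ge> 0 \<Longrightarrow> Ftel s x \<ge> 0"
  by (auto simp: Ftel_def)

lemma Ftel_step:
  assumes s: "s > 0" and x: "x \<ge> 1"
  shows "exp (- (x^2 / s^2)) \<le> Ftel s (x - 1) - Ftel s x"
proof (cases "x \<le> s")
  case True
  then have "Ftel s (x - 1) - Ftel s x = 1" by (simp add: Ftel_def)
  moreover have "exp (- (x^2 / s^2)) \<le> 1" by simp
  ultimately show ?thesis by simp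
next
  case False
  have xs: "x > s" using False by simp
  have e: "exp (- (x^2 / s^2)) \<le> s^2 / x^2"
    using exp_neg_le_inv[of "x^2/s^2"] s x by (simp add: field_simps)
  show ?thesis
  proof (cases "x - 1 \<le> s")
    case True
    have F: "Ftel s (x - 1) - Ftel s x = 2 * s - (x - 1) - s^2 / x"
      using True xs by (simp add: Ftel_def)
    have p1: "(2 * s - x + 1) * x - s^2 - s = (x - s) * (1 - (x - s))"
      by (simp add: algebra_simps power2_eq_square)
    have p2: "(x - s) * (1 - (x - s)) \<ge> 0" using True xs by simp
    have a: "(2 * s - x + 1) * x - s^2 \<ge> s" using p1 p2 by linarith
    have "((2 * s - x + 1) * x - s^2) * x \<ge> s * x"
      using a x by (intro mult_right_mono) auto
    also have "s * x \<ge> s * s" using xs s by (intro mult_left_mono) auto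
    finally have b: "((2 * s - x + 1) * x - s^2) * x \<ge> s^2" by (simp add: power2_eq_square)
    have "s^2 / x^2 \<le> 2 * s - (x - 1) - s^2 / x"
      using b x by (simp add: field_simps power2_eq_square)
    then show ?thesis using e F by linarith
  next
    case False
    have F: "Ftel s (x - 1) - Ftel s x = s^2 / (x - 1) - s^2 / x"
      using False xs by (simp add: Ftel_def)
    have x1: "x - 1 > 0" using False s by linarith
    have "s^2 / (x - 1) - s^2 / x = s^2 / (x * (x - 1))"
      using x1 by (simp add: field_simps)
    also have "\<dots> \<ge> s^2 / (x * x)"
      using x1 x by (intro divide_left_mono mult_left_mono mult_pos_pos) auto
    finally show ?thesis using e F by (simp add: power2_eq_square)
  qed
qed

lemma gauss_sum_bound:
  assumes b: "\<beta> > 0"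
  shows "(\<Sum>j=1..N. exp (- \<beta> * real j ^ 2)) \<le> 2 / sqrt \<beta>"
proof -
  define s where "s = 1 / sqrt \<beta>"
  have s: "s > 0" using b by (simp add: s_def)
  have bs: "\<beta> = 1 / s^2" using b by (simp add: s_def power_divide real_sqrt_pow2 less_imp_le)
  have ind: "(\<Sum>j=1..N. exp (- \<beta> * real j ^ 2)) \<le> Ftel s 0 - Ftel s (real N)" for N
  proof (induction N)
    case 0
    then show ?case by simp
  next
    case (Suc N)
    have "exp (- \<beta> * real (Suc N) ^ 2) \<le> Ftel s (real (Suc N) - 1) - Ftel s (real (Suc N))"
      using Ftel_step[OF s, of "real (Suc N)"] by (simp add: bs)
    then show ?case using Suc by simp
  qed
  have "Ftel s 0 = 2 * s" using s by (simp add: Ftel_def)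
  moreover have "Ftel s (real N) \<ge> 0" using Ftel_nonneg[OF s] by simp
  ultimately show ?thesis using ind[of N] by (simp add: s_def)
qed



lemma cis_root_eq_1:
  assumes d: "d \<ge> 1" and w: "cis (2 * pi * real k / real d) = 1"
  shows "d dvd k"
proof -
  define r where "r = k mod d"
  have kk: "real k = real d * real (k div d) + real r"
  proof -
    have "k = d * (k div d) + r" by (simp add: r_def)
    then have "real k = real (d * (k div d) + r)" by (rule arg_cong)
    then show ?thesis by simp
  qed
  have arg: "2 * pi * real k / real d = 2 * pi * real r / real d + 2 * pi * real (k div d)"
    using d unfolding kk by (simp add: field_simps)
  have "cis (2 * pi * real k / real d) = cis (2 * pi * real r / real d) * cis (2 * pi * real (k div d))"
    unfolding arg by (rule cis_mult[symmetric])
  also have "cis (2 * pi * real (k div d)) = 1"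
    by (rule cis_multiple_2pi) simp
  finally have "cis (2 * pi * real r / real d) = cis (2 * pi * real 0 / real d)"
    using w by simp
  moreover have "inj_on (\<lambda>k. cis (2 * pi * real k / real d)) {..<d}"
    using Complex.bij_betw_roots_unity[of d] d unfolding bij_betw_def by simp
  moreover have "r \<in> {..<d}" using d by (simp add: r_def)
  moreover have "0 \<in> {..<d}" using d by simp
  ultimately have "r = 0" by (meson inj_on_eq_iff)
  then show ?thesis by (simp add: r_def dvd_eq_mod_eq_0)
qed

lemma root_filter:
  assumes d: "d \<ge> 1"
  shows "(\<Sum>j<d. cis (2 * pi * real j / real d) ^ k) = (if d dvd k then of_nat d else 0)"
proof -
  define w where "w = cis (2 * pi * real k / real d)"
  have pw: "cis (2 * pi * real j / real d) ^ k = w ^ j" for j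
  proof -
    have "cis (2 * pi * real j / real d) ^ k = cis (real k * (2 * pi * real j / real d))" by (rule Complex.DeMoivre)
    also have "real k * (2 * pi * real j / real d) = real j * (2 * pi * real k / real d)" by simp
    also have "cis \<dots> = w ^ j" unfolding w_def by (rule Complex.DeMoivre[symmetric])
    finally show ?thesis .
  qed
  have wd: "w ^ d = 1"
  proof -
    have "w ^ d = cis (real d * (2 * pi * real k / real d))" unfolding w_def by (rule Complex.DeMoivre)
    also have "real d * (2 * pi * real k / real d) = 2 * pi * real k" using d by simp
    also have "cis \<dots> = 1" by (rule cis_multiple_2pi) simp
    finally show ?thesis .
  qed
  show ?thesis
  proof (cases "d dvd k")
    case True
    then obtain m where m: "k = d * m" by blast
    have "2 * pi * real k / real d = 2 * pi * real m" using d unfolding m by simp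
    then have "w = cis (2 * pi * real m)" unfolding w_def by simp
    also have "\<dots> = 1" by (rule cis_multiple_2pi) simp
    finally have "w = 1" .
    then show ?thesis using True by (simp add: pw)
  next
    case False
    then have "w \<noteq> 1" using cis_root_eq_1[OF d] unfolding w_def by blast
    then have "(\<Sum>j<d. w ^ j) = 0" by (simp add: sum_gp_strict wd)
    then show ?thesis using False by (simp add: pw)
  qed
qed

definition qd :: "real \<Rightarrow> nat \<Rightarrow> nat \<Rightarrow> real" where
  "qd \<alpha> i d = (\<Sum>k=0..i. bprob \<alpha> i k * (if d dvd k then 1 else 0))"

lemma qd_complex:
  assumes d: "d \<ge> 1"
  shows "complex_of_real (qd \<alpha> i d) =
     (\<Sum>j<d. (complex_of_real \<alpha> * cis (2 * pi * real j / real d) + complex_of_real (1 - \<alpha>)) ^ i) / of_nat d"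
proof -
  let ?c = "\<lambda>j. cis (2 * pi * real j / real d)"
  have "complex_of_real (qd \<alpha> i d) = (\<Sum>k=0..i. complex_of_real (bprob \<alpha> i k) * ((\<Sum>j<d. ?c j ^ k) / of_nat d))"
    unfolding qd_def of_real_sum using d by (intro sum.cong refl) (simp add: root_filter)
  also have "\<dots> = (\<Sum>j<d. \<Sum>k=0..i. complex_of_real (bprob \<alpha> i k) * ?c j ^ k) / of_nat d"
  proof -
    have "(\<Sum>k=0..i. complex_of_real (bprob \<alpha> i k) * ((\<Sum>j<d. ?c j ^ k) / of_nat d))
        = (\<Sum>k=0..i. \<Sum>j<d. complex_of_real (bprob \<alpha> i k) * ?c j ^ k) / of_nat d"
      by (simp only: sum_divide_distrib sum_distrib_left times_divide_eq_right)
    also have "\<dots> = (\<Sum>j<d. \<Sum>k=0..i. complex_of_real (bprob \<alpha> i k) * ?c j ^ k) / of_nat d"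
      by (subst sum.swap) (rule refl)
    finally show ?thesis .
  qed
  also have "\<dots> = (\<Sum>j<d. (complex_of_real \<alpha> * ?c j + complex_of_real (1 - \<alpha>)) ^ i) / of_nat d"
  proof -
    have "(\<Sum>k=0..i. complex_of_real (bprob \<alpha> i k) * ?c j ^ k) = (complex_of_real \<alpha> * ?c j + complex_of_real (1 - \<alpha>)) ^ i" for j
    proof -
      have "(complex_of_real \<alpha> * ?c j + complex_of_real (1 - \<alpha>)) ^ i =
          (\<Sum>k\<le>i. of_nat (i choose k) * (complex_of_real \<alpha> * ?c j) ^ k * complex_of_real (1 - \<alpha>) ^ (i - k))"
        by (rule binomial_ring)
      also have "\<dots> = (\<Sum>k=0..i. complex_of_real (bprob \<alpha> i k) * ?c j ^ k)"
        by (intro sum.cong) (auto simp: bprob_def power_mult_distrib atLeast0AtMost)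
      finally show ?thesis by simp
    qed
    then show ?thesis by simp
  qed
  finally show ?thesis .
qed



lemma cmod_sq:
  fixes \<alpha> x :: real
  shows "(cmod (complex_of_real \<alpha> * cis (2 * x) + complex_of_real (1 - \<alpha>)))^2 = 1 - 4 * \<alpha> * (1 - \<alpha>) * sin x ^ 2"
proof -
  define c where "c = cos (2 * x)"
  define s where "s = sin (2 * x)"
  have cs: "c^2 + s^2 = 1" by (simp add: c_def s_def)
  have c2: "c = 1 - 2 * sin x ^ 2" by (simp add: c_def cos_double_sin)
  have "(cmod (complex_of_real \<alpha> * cis (2 * x) + complex_of_real (1 - \<alpha>)))^2 = (\<alpha> * c + (1 - \<alpha>))^2 + (\<alpha> * s)^2"
    by (simp add: cmod_power2 c_def s_def)
  also have "\<dots> = \<alpha>^2 * (c^2 + s^2) + 2 * \<alpha> * (1 - \<alpha>) * c + (1 - \<alpha>)^2"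
    by (simp add: algebra_simps power2_eq_square)
  also have "\<dots> = \<alpha>^2 + 2 * \<alpha> * (1 - \<alpha>) * c + (1 - \<alpha>)^2"
    using cs by simp
  also have "\<dots> = 1 - 4 * \<alpha> * (1 - \<alpha>) * sin x ^ 2"
    unfolding c2 by (simp add: algebra_simps power2_eq_square)
  finally show ?thesis .
qed

lemma sin_ge_third:
  assumes "0 \<le> x" "x \<le> pi / 2"
  shows "sin x \<ge> x / 3"
proof -
  have m: "\<bar>sin x - (\<Sum>m<3. sin_coeff m * x ^ m)\<bar> \<le> inverse (fact 3) * \<bar>x\<bar> ^ 3"
    by (rule Maclaurin_sin_bound)
  have s3: "(\<Sum>m<3. sin_coeff m * x ^ m) = x"
    by (simp add: sin_coeff_def eval_nat_numeral)
  have f3: "inverse (fact 3 :: real) = 1 / 6" by (simp add: eval_nat_numeral)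
  have "x^2 \<le> (pi/2)^2" using assms by (intro power_mono) auto
  also have "(pi/2)^2 \<le> 2^2" using pi_less_4 pi_gt_zero by (intro power_mono) auto
  also have "(2::real)^2 = 4" by simp
  finally have x2: "x^2 \<le> 4" .
  have "x^3 / 6 \<le> 4 * x / 6"
  proof -
    have "x^3 = x * x^2" by (simp add: power2_eq_square power3_eq_cube)
    also have "\<dots> \<le> x * 4" using x2 assms by (intro mult_left_mono) auto
    finally show ?thesis by simp
  qed
  have "\<bar>sin x - x\<bar> \<le> x^3/6" using m unfolding s3 f3 using assms by simp
  then have "sin x \<ge> x - x^3/6" unfolding abs_le_iff by linarith
  then show ?thesis using \<open>x^3 / 6 \<le> 4 * x / 6\<close> by linarith
qed


lemma zj_bound:
  assumes a: "0 < \<alpha>" "\<alpha> < 1" and d: "d \<ge> 1" and j: "1 \<le> j" "j < d"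
  shows "cmod (complex_of_real \<alpha> * cis (2 * pi * real j / real d) + complex_of_real (1 - \<alpha>)) ^ i
    \<le> exp (- (2 * \<alpha> * (1 - \<alpha>) * real i / real d ^ 2) * real (min j (d - j)) ^ 2)"
proof -
  define x where "x = pi * real j / real d"
  define m where "m = min j (d - j)"
  define t where "t = real m / real d"
  define c where "c = \<alpha> * (1 - \<alpha>)"
  have c: "c > 0" using a by (simp add: c_def)
  have dpos: "real d > 0" using d by simp
  have arg: "2 * pi * real j / real d = 2 * x" by (simp add: x_def)
  have sx: "sin x = sin (pi * t)"
  proof (cases "j \<le> d - j")
    case True
    then show ?thesis by (simp add: x_def t_def m_def)
  next
    case False
    then have "m = d - j" by (simp add: m_def)
    then have "pi * t = pi - x" using j dpos by (simp add: t_def x_def of_nat_diff field_simps)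
    then show ?thesis by simp
  qed
  have m2: "2 * m \<le> d" by (simp add: m_def)
  have t0: "0 \<le> t" by (simp add: t_def)
  have th: "t \<le> 1/2" using m2 dpos by (simp add: t_def field_simps)
  have "sin (pi * t) \<ge> pi * t / 3"
    using t0 th by (intro sin_ge_third) auto
  moreover have "pi * t / 3 \<ge> t"
  proof -
    have "3 * t \<le> pi * t" by (rule mult_right_mono) (use pi_gt3 t0 in auto)
    then show ?thesis by simp
  qed
  ultimately have st: "sin (pi * t) \<ge> t" by linarith
  have st2: "sin x ^ 2 \<ge> t ^ 2" unfolding sx using st t0 by (intro power_mono) auto
  have "(cmod (complex_of_real \<alpha> * cis (2 * x) + complex_of_real (1 - \<alpha>)))^2 = 1 - 4 * c * sin x ^ 2"
    using cmod_sq[of \<alpha> x] by (simp add: c_def mult.assoc)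
  also have "\<dots> \<le> 1 - 4 * c * t ^ 2" using st2 c by (simp add: mult_left_mono)
  also have "\<dots> \<le> exp (- (4 * c * t ^ 2))" using exp_ge_add_one_self[of "- (4 * c * t ^ 2)"] by simp
  also have "\<dots> = (exp (- (2 * c * t ^ 2)))^2" by (simp add: exp_double[symmetric] power2_eq_square exp_add[symmetric])
  finally have "cmod (complex_of_real \<alpha> * cis (2 * x) + complex_of_real (1 - \<alpha>)) \<le> exp (- (2 * c * t ^ 2))"
    by (rule power2_le_imp_le) simp
  then have "cmod (complex_of_real \<alpha> * cis (2 * x) + complex_of_real (1 - \<alpha>)) ^ i \<le> exp (- (2 * c * t ^ 2)) ^ i"
    by (intro power_mono) simp_all
  also have "\<dots> = exp (real i * (- (2 * c * t ^ 2)))" by (rule exp_of_nat_mult[symmetric])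
  also have "real i * (- (2 * c * t ^ 2)) = - (2 * \<alpha> * (1 - \<alpha>) * real i / real d ^ 2) * real m ^ 2"
    using dpos by (simp add: c_def t_def field_simps power2_eq_square)
  finally show ?thesis unfolding arg m_def .
qed

lemma qd_bound:
  assumes a: "0 < \<alpha>" "\<alpha> < 1" and d: "d \<ge> 1" and i: "i \<ge> 1"
  shows "\<bar>qd \<alpha> i d - 1 / real d\<bar> \<le> 4 / sqrt (2 * \<alpha> * (1 - \<alpha>) * real i)"
proof -
  define z where "z j = complex_of_real \<alpha> * cis (2 * pi * real j / real d) + complex_of_real (1 - \<alpha>)" for j
  define \<beta> where "\<beta> = 2 * \<alpha> * (1 - \<alpha>) * real i / real d ^ 2"
  define g where "g m = exp (- \<beta> * real m ^ 2)" for m :: nat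
  have dpos: "real d > 0" using d by simp
  have bpos: "\<beta> > 0" using a i dpos by (simp add: \<beta>_def)
  have z0: "z 0 = 1" unfolding z_def by (simp flip: of_real_add)
  have split: "{..<d} = insert 0 {1..<d}" using d by auto
  have "complex_of_real (qd \<alpha> i d) = (\<Sum>j<d. z j ^ i) / of_nat d"
    unfolding z_def by (rule qd_complex[OF d])
  also have "(\<Sum>j<d. z j ^ i) = 1 + (\<Sum>j\<in>{1..<d}. z j ^ i)"
    unfolding split by (subst sum.insert) (auto simp: z0)
  finally have "complex_of_real (qd \<alpha> i d - 1 / real d) = (\<Sum>j\<in>{1..<d}. z j ^ i) / of_nat d"
    using dpos by (simp add: field_simps)
  then have "\<bar>qd \<alpha> i d - 1 / real d\<bar> = cmod (\<Sum>j\<in>{1..<d}. z j ^ i) / real d"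
    by (metis norm_of_real norm_divide norm_of_nat)
  also have "\<dots> \<le> (\<Sum>j\<in>{1..<d}. cmod (z j) ^ i) / real d"
    using dpos by (intro divide_right_mono) (auto intro: order.trans[OF norm_sum] simp: norm_power)
  also have "\<dots> \<le> (\<Sum>j\<in>{1..<d}. g (min j (d - j))) / real d"
  proof -
    have zb: "cmod (z j) ^ i \<le> g (min j (d - j))" if "j \<in> {1..<d}" for j
    proof -
      from that have "1 \<le> j" "j < d" by auto
      from zj_bound[OF a d this, of i] show ?thesis unfolding z_def g_def \<beta>_def .
    qed
    show ?thesis using dpos by (intro divide_right_mono sum_mono zb) auto
  qed
  also have "\<dots> \<le> (\<Sum>j\<in>{1..<d}. g j + g (d - j)) / real d"
    using dpos by (intro divide_right_mono sum_mono) (auto simp: g_def min_def)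
  also have "(\<Sum>j\<in>{1..<d}. g j + g (d - j)) = (\<Sum>j\<in>{1..<d}. g j) + (\<Sum>j\<in>{1..<d}. g (d - j))"
    by (rule sum.distrib)
  also have "(\<Sum>j\<in>{1..<d}. g (d - j)) = (\<Sum>j\<in>{1..<d}. g j)"
    by (rule sum.reindex_bij_witness[where i = "\<lambda>j. d - j" and j = "\<lambda>j. d - j"]) auto
  also have "(\<Sum>j\<in>{1..<d}. g j) \<le> (\<Sum>j=1..d. g j)"
    by (intro sum_mono2) (auto simp: g_def)
  also have "\<dots> \<le> 2 / sqrt \<beta>"
    unfolding g_def by (rule gauss_sum_bound[OF bpos])
  finally have "\<bar>qd \<alpha> i d - 1 / real d\<bar> \<le> 4 / (real d * sqrt \<beta>)"
    using dpos by (simp add: field_simps)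
  also have "real d * sqrt \<beta> = sqrt (2 * \<alpha> * (1 - \<alpha>) * real i)"
    using dpos by (simp add: \<beta>_def real_sqrt_mult real_sqrt_divide)
  finally show ?thesis .
qed



lemma pv_mobius:
  assumes i: "i \<ge> 1"
  shows "(\<Sum>k=0..i. bprob \<alpha> i k * (if coprime k i then 1 else 0)) = (\<Sum>d | d dvd i. mu d * qd \<alpha> i d)"
proof -
  have fin: "finite {d. d dvd i}" using i by (auto intro: finite_subset[of _ "{..i}"] dest: dvd_imp_le)
  have cop: "(if coprime k i then 1 else 0) = (\<Sum>d | d dvd i. mu d * (if d dvd k then 1 else 0))" for k
  proof -
    have g: "gcd k i > 0" using i by simp
    have "(if coprime k i then 1 else 0) = (\<Sum>d | d dvd gcd k i. mu d)"
      using mu_sum[OF g] by (simp add: coprime_iff_gcd_eq_1)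
    also have "{d. d dvd gcd k i} = {d \<in> {d. d dvd i}. d dvd k}" by auto
    also have "(\<Sum>d \<in> {d \<in> {d. d dvd i}. d dvd k}. mu d) = (\<Sum>d | d dvd i. if d dvd k then mu d else 0)"
      by (rule sum.inter_filter[OF fin])
    also have "\<dots> = (\<Sum>d | d dvd i. mu d * (if d dvd k then 1 else 0))"
      by (intro sum.cong) auto
    finally show ?thesis .
  qed
  have "(\<Sum>k=0..i. bprob \<alpha> i k * (if coprime k i then 1 else 0))
      = (\<Sum>k=0..i. \<Sum>d | d dvd i. mu d * (bprob \<alpha> i k * (if d dvd k then 1 else 0)))"
    unfolding cop by (simp add: sum_distrib_left mult.left_commute)
  also have "\<dots> = (\<Sum>d | d dvd i. \<Sum>k=0..i. mu d * (bprob \<alpha> i k * (if d dvd k then 1 else 0)))"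
    by (rule sum.swap)
  also have "\<dots> = (\<Sum>d | d dvd i. mu d * qd \<alpha> i d)"
    by (simp add: qd_def sum_distrib_left)
  finally show ?thesis .
qed

lemma total_bound:
  assumes a: "0 < \<alpha>" "\<alpha> < 1" and n: "n \<ge> 1"
  shows "\<bar>expected_visible \<alpha> n - 6 * real n / pi^2\<bar>
     \<le> 3 * (1 + ln (real n)) + 4 / sqrt (2 * \<alpha> * (1 - \<alpha>)) * (2 * sqrt (real n) * (1 + ln (real n)))"
proof -
  define C where "C = 4 / sqrt (2 * \<alpha> * (1 - \<alpha>))"
  have C: "C > 0" using a by (simp add: C_def)
  have ev: "expected_visible \<alpha> n = (\<Sum>i=1..n. \<Sum>d | d dvd i. mu d * qd \<alpha> i d)"
    unfolding expected_visible_eq[OF a] by (intro sum.cong refl pv_mobius) auto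
  have err: "\<bar>(\<Sum>d | d dvd i. mu d * qd \<alpha> i d) - (\<Sum>d | d dvd i. mu d / real d)\<bar>
      \<le> (\<Sum>d | d dvd i. C * (1 / sqrt (real i)))" if i: "i \<in> {1..n}" for i
  proof -
    have "(\<Sum>d | d dvd i. mu d * qd \<alpha> i d) - (\<Sum>d | d dvd i. mu d / real d)
        = (\<Sum>d | d dvd i. mu d * (qd \<alpha> i d - 1 / real d))"
      by (simp add: sum_subtractf algebra_simps)
    also have "\<bar>\<dots>\<bar> \<le> (\<Sum>d | d dvd i. \<bar>mu d * (qd \<alpha> i d - 1 / real d)\<bar>)"
      by (rule sum_abs)
    also have "\<dots> \<le> (\<Sum>d | d dvd i. C * (1 / sqrt (real i)))"
    proof (rule sum_mono)
      fix d assume "d \<in> {d. d dvd i}"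
      then have "d dvd i" by simp
      moreover have "i \<noteq> 0" using i by simp
      ultimately have "d \<noteq> 0" by auto
      then have d: "d \<ge> 1" by simp
      have ib: "i \<ge> 1" using i by simp
      have "\<bar>mu d * (qd \<alpha> i d - 1 / real d)\<bar> = \<bar>mu d\<bar> * \<bar>qd \<alpha> i d - 1 / real d\<bar>" by (simp add: abs_mult)
      also have "\<dots> \<le> 1 * (4 / sqrt (2 * \<alpha> * (1 - \<alpha>) * real i))"
        by (intro mult_mono abs_mu_le qd_bound[OF a d ib]) auto
      also have "\<dots> = C * (1 / sqrt (real i))"
        by (simp add: C_def real_sqrt_mult)
      finally show "\<bar>mu d * (qd \<alpha> i d - 1 / real d)\<bar> \<le> C * (1 / sqrt (real i))" .
    qed
    finally show ?thesis .
  qed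
  have "\<bar>expected_visible \<alpha> n - 6 * real n / pi^2\<bar>
      \<le> \<bar>(\<Sum>i=1..n. \<Sum>d | d dvd i. mu d / real d) - 6 * real n / pi^2\<bar>
        + \<bar>\<Sum>i=1..n. (\<Sum>d | d dvd i. mu d * qd \<alpha> i d) - (\<Sum>d | d dvd i. mu d / real d)\<bar>"
    unfolding ev by (simp add: sum_subtractf)
  also have "\<bar>\<Sum>i=1..n. (\<Sum>d | d dvd i. mu d * qd \<alpha> i d) - (\<Sum>d | d dvd i. mu d / real d)\<bar>
      \<le> (\<Sum>i=1..n. \<Sum>d | d dvd i. C * (1 / sqrt (real i)))"
    by (rule order.trans[OF sum_abs sum_mono[OF err]])
  also have "(\<Sum>i=1..n. \<Sum>d | d dvd i. C * (1 / sqrt (real i))) = C * (\<Sum>i=1..n. \<Sum>d | d dvd i. 1 / sqrt (real i))"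
    by (simp only: sum_distrib_left)
  also have "\<dots> \<le> C * (2 * sqrt (real n) * (1 + ln (real n)))"
    using C divisor_sqrt_sum_le[OF n] by (intro mult_left_mono) auto
  also have "\<bar>(\<Sum>i=1..n. \<Sum>d | d dvd i. mu d / real d) - 6 * real n / pi^2\<bar> \<le> 3 * (1 + ln (real n))"
    by (rule order.trans[OF main_term[OF n]]) (use harm_le_ln[OF n] in simp)
  finally show ?thesis unfolding C_def by simp
qed

theorem proposition1:
  fixes \<alpha> :: real
  assumes "0 < \<alpha>" and "\<alpha> < 1"
  shows "(\<lambda>n. expected_visible \<alpha> n - 6 * real n / pi\<^sup>2) \<in> O(\<lambda>n. sqrt (real n) * ln (real n))"
proof (rule bigoI)
  define C where "C = 4 / sqrt (2 * \<alpha> * (1 - \<alpha>))"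
  have C: "C > 0" using assms by (simp add: C_def)
  show "eventually (\<lambda>n. norm (expected_visible \<alpha> n - 6 * real n / pi\<^sup>2) \<le> (6 + 4 * C) * norm (sqrt (real n) * ln (real n))) at_top"
    unfolding eventually_at_top_linorder
  proof (intro exI[of _ 3] allI impI)
    fix n :: nat assume n3: "n \<ge> 3"
    have n: "n \<ge> 1" using n3 by simp
    have "ln (real n) \<ge> ln 3" using n3 by simp
    moreover have "ln 3 \<ge> (1::real)"
      using exp_le ln_ge_iff[of 3 1] by simp
    ultimately have l1: "ln (real n) \<ge> 1" by linarith
    have s1: "sqrt (real n) \<ge> 1" using n by simp
    have b: "\<bar>expected_visible \<alpha> n - 6 * real n / pi^2\<bar> \<le> 3 * (1 + ln (real n)) + C * (2 * sqrt (real n) * (1 + ln (real n)))"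
      using total_bound[OF assms n] by (simp add: C_def)
    have "3 * (1 + ln (real n)) \<le> 6 * (sqrt (real n) * ln (real n))"
    proof -
      have "1 + ln (real n) \<le> 2 * ln (real n)" using l1 by simp
      also have "\<dots> \<le> 2 * (sqrt (real n) * ln (real n))"
      proof -
        have "1 * ln (real n) \<le> sqrt (real n) * ln (real n)" by (rule mult_right_mono) (use s1 l1 in auto)
        then show ?thesis by simp
      qed
      finally show ?thesis by simp
    qed
    moreover have "C * (2 * sqrt (real n) * (1 + ln (real n))) \<le> 4 * C * (sqrt (real n) * ln (real n))"
    proof -
      have "1 + ln (real n) \<le> 2 * ln (real n)" using l1 by simp
      then have "2 * sqrt (real n) * (1 + ln (real n)) \<le> 2 * sqrt (real n) * (2 * ln (real n))"
        by (intro mult_left_mono) auto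
      then show ?thesis using C by (simp add: mult_left_mono algebra_simps)
    qed
    ultimately have "\<bar>expected_visible \<alpha> n - 6 * real n / pi^2\<bar> \<le> (6 + 4 * C) * (sqrt (real n) * ln (real n))"
      using b by (simp add: algebra_simps)
    moreover have "sqrt (real n) * ln (real n) \<ge> 0" using l1 by simp
    ultimately show "norm (expected_visible \<alpha> n - 6 * real n / pi\<^sup>2) \<le> (6 + 4 * C) * norm (sqrt (real n) * ln (real n))"
      by simp
  qed
qed

end
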